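(* If $x\ge1$ then $\Gamma(x,x)\ge\dfrac{\Gamma(x)}{x^{x}}$, and if $0<x\le1$ then $\Gamma(x,x)\le\dfrac{\Gamma(x)}{x^{x}}$.
   Context: For $x>0,y>0$ the Bigamma function is the (convergent) improper integral $\Gamma(x,y):=\int_0^1(-\ln t)^{x-1}\big(-\ln(1-t)\big)^{y-1}\,dt$. $\Gamma(x)$ (one argument) denotes Euler's gamma function. *)

theory Defs
  imports "HOL-Analysis.Analysis"
begin

text \<open>Bigamma function: the improper integral over (0,1) of a nonnegative integrand,
  rendered as the Lebesgue integral over the open interval (0,1).\<close>
definition Bigamma :: "real \<Rightarrow> real \<Rightarrow> real" where
  "Bigamma x y = (LBINT t:{0<..<1}. (- ln t) powr (x - 1) * (- ln (1 - t)) powr (y - 1))"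

end

theory Submission
  imports Defs "HOL-Real_Asymp.Real_Asymp"
begin

lemma gamma_set:
  fixes x :: real
  assumes x: "x > 0"
  shows "set_integrable lborel {0<..} (\<lambda>t. t powr (x-1) / exp t)"
        "(LBINT t:{0<..}. t powr (x-1) / exp t) = Gamma x"
proof -
  define h where "h = (\<lambda>t::real. indicator {0<..} t * (t powr (x-1) / exp t))"
  have heq: "h t = indicator {0..} t * t powr (x - 1) / exp t" for t
    by (cases "t = 0") (auto simp: h_def indicator_def)
  have "(\<integral>\<^sup>+t. ennreal (h t) \<partial>lborel) = ennreal (Gamma x)"
    using Gamma_conv_nn_integral_real[OF x] by (simp add: heq)
  moreover have "h \<in> borel_measurable lborel" unfolding h_def by measurable
  moreover have "AE t in lborel. 0 \<le> h t" by (auto simp: h_def indicator_def)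
  ultimately have "integrable lborel h \<and> integral\<^sup>L lborel h = Gamma x"
    using nn_integral_eq_integrable[of h lborel "Gamma x"] Gamma_real_pos[OF x] by simp
  then show "set_integrable lborel {0<..} (\<lambda>t. t powr (x-1) / exp t)"
        "(LBINT t:{0<..}. t powr (x-1) / exp t) = Gamma x"
    by (simp_all add: set_integrable_def set_lebesgue_integral_def h_def)
qed


lemma key:
  fixes x :: real
  assumes x: "x > 0"
  shows "set_integrable lborel {0<..<1} (\<lambda>t. ((1-t) * (-ln(1-t))) powr (x-1))"
        "(LBINT t:{0<..<1}. ((1-t) * (-ln(1-t))) powr (x-1)) = Gamma x / x powr x"
proof -
  define f where "f = (\<lambda>t::real. ((1-t) * (-ln(1-t))) powr (x-1))"
  define g where "g = (\<lambda>u::real. 1 - exp (-u/x))"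
  define g' where "g' = (\<lambda>u::real. exp (-u/x) / x)"
  have fg: "f (g u) * g' u = u powr (x-1) / exp u / x powr x" if u: "u > 0" for u
  proof -
    have "f (g u) * g' u = (exp (-u/x) * (u/x)) powr (x-1) * (exp (-u/x) / x)"
      by (simp add: f_def g_def g'_def)
    also have "\<dots> = exp (-u/x * (x-1)) * (u powr (x-1) / x powr (x-1)) * (exp (-u/x) / x)"
      using u x by (simp add: powr_mult powr_divide exp_powr_real)
    also have "\<dots> = u powr (x-1) * (exp (-u/x * (x-1)) * exp (-u/x)) / (x powr (x-1) * x)"
      by simp
    also have "exp (-u/x * (x-1)) * exp (-u/x) = exp (-u)"
      using x by (simp add: exp_add[symmetric] field_simps)
    also have "x powr (x-1) * x = x powr x"
      using x by (simp add: powr_diff)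
    finally show ?thesis by (simp add: exp_minus field_simps)
  qed
  have int1: "set_integrable lborel (einterval 0 \<infinity>) (\<lambda>u. f (g u) * g' u)"
  proof -
    have "set_integrable lborel {0<..} (\<lambda>u. u powr (x-1) / exp u / x powr x)"
      by (intro set_integrable_divide gamma_set x)
    then show ?thesis
      by (rule set_integrable_cong[THEN iffD1, rotated -1]) (auto simp: fg einterval_iff zero_ereal_def)
  qed
  have deriv: "\<And>u. 0 < ereal u \<Longrightarrow> ereal u < \<infinity> \<Longrightarrow> DERIV g u :> g' u"
    using x unfolding g_def g'_def by (auto intro!: derivative_eq_intros)
  have contf: "\<And>u. 0 < ereal u \<Longrightarrow> ereal u < \<infinity> \<Longrightarrow> isCont f (g u)"
  proof -
    fix u assume "0 < ereal u"
    then have u: "u > 0" by (simp add: zero_ereal_def)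
    then have "exp (-u/x) < 1" using x by simp
    then have "0 < 1 - g u" "1 - g u < 1" by (auto simp: g_def)
    then show "isCont f (g u)" unfolding f_def
      by (intro continuous_intros) (auto simp: ln_less_zero_iff mult_pos_neg)
  qed
  have contg': "\<And>u. 0 < ereal u \<Longrightarrow> ereal u < \<infinity> \<Longrightarrow> isCont g' u"
    using x unfolding g'_def by (intro continuous_intros) auto
  have fnn: "\<And>u. 0 < ereal u \<Longrightarrow> ereal u < \<infinity> \<Longrightarrow> 0 \<le> f (g u)"
    unfolding f_def by simp
  have g'nn: "\<And>u. 0 \<le> ereal u \<Longrightarrow> ereal u \<le> \<infinity> \<Longrightarrow> 0 \<le> g' u"
    using x unfolding g'_def by simp
  have limA: "((ereal \<circ> g \<circ> real_of_ereal) \<longlongrightarrow> 0) (at_right 0)"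
    using x unfolding zero_ereal_def ereal_tendsto_simps g_def
    by (auto intro!: tendsto_eq_intros)
  have "(g \<longlongrightarrow> 1) at_top" unfolding g_def using x by real_asymp
  then have limB: "((ereal \<circ> g \<circ> real_of_ereal) \<longlongrightarrow> 1) (at_left \<infinity>)"
    unfolding one_ereal_def ereal_tendsto_simps .
  have ab: "(0::ereal) < \<infinity>" by simp
  note sub = interval_integral_substitution_nonneg[where a=0 and b=\<infinity> and g=g and g'=g' and f=f and A=0 and B=1,
     OF ab deriv contf contg' fnn g'nn limA limB int1]
  have e1: "einterval 0 1 = {0<..<(1::real)}"
    by (auto simp: einterval_iff zero_ereal_def one_ereal_def)
  show "set_integrable lborel {0<..<1} (\<lambda>t. ((1-t) * (-ln(1-t))) powr (x-1))"
    using sub(1) by (simp add: e1 f_def)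
  have "(LBINT t:{0<..<1}. f t) = (LBINT t=0..1. f t)"
    by (subst interval_integral_Ioo) (auto simp: zero_ereal_def one_ereal_def)
  also have "\<dots> = (LBINT u=0..\<infinity>. f (g u) * g' u)" by (rule sub(2))
  also have "\<dots> = (LBINT u:{0<..}. f (g u) * g' u)"
    by (subst interval_integral_Ioi) (auto simp: zero_ereal_def)
  also have "\<dots> = (LBINT u:{0<..}. u powr (x-1) / exp u / x powr x)"
    by (rule set_lebesgue_integral_cong) (auto simp: fg)
  also have "\<dots> = Gamma x / x powr x"
    using gamma_set(2)[OF x] by (simp only: set_integral_divide_zero)
  finally show "(LBINT t:{0<..<1}. ((1-t) * (-ln(1-t))) powr (x-1)) = Gamma x / x powr x"
    by (simp add: f_def)
qed

lemma half_bound: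
  fixes t :: real
  assumes t: "0 < t" "t \<le> 1/2"
  shows "(-ln t) * (-ln (1-t)) \<le> 1"
proof -
  have "- t - 2 * t\<^sup>2 \<le> ln (1 - t)" using ln_one_minus_pos_lower_bound[of t] t by simp
  moreover have "2 * t\<^sup>2 \<le> t" using t by (simp add: power2_eq_square)
  ultimately have a: "-ln (1-t) \<le> 2 * t" by linarith
  define s where "s = sqrt t"
  have s: "0 < s" "s * s = t" using t by (auto simp: s_def)
  have "ln t = ln s + ln s" using s ln_mult[of s s] by simp
  moreover have "ln (1/s) \<le> 1/s - 1" using s by (intro ln_le_minus_one) auto
  ultimately have "-ln t \<le> 2/s - 2" using s by (simp add: ln_div)
  then have "t * (-ln t) \<le> t * (2/s - 2)" using t by (intro mult_left_mono) auto
  also have "\<dots> = 2 * s - 2 * s * s" unfolding s(2)[symmetric] using s(1) by (simp add: field_simps)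
  also have "\<dots> \<le> 1/2"
  proof -
    have "0 \<le> (2 * s - 1)^2" by simp
    then show ?thesis by (simp add: power2_eq_square algebra_simps)
  qed
  finally have b: "t * (-ln t) \<le> 1/2" .
  have c: "0 \<le> -ln t" using t by simp
  have "(-ln t) * (-ln (1-t)) \<le> (-ln t) * (2*t)" using a c by (intro mult_left_mono) auto
  also have "\<dots> \<le> 1" using b by (simp add: algebra_simps)
  finally show ?thesis .
qed

lemma prod_bound:
  fixes t :: real
  assumes t: "0 < t" "t < 1"
  shows "(-ln t) * (-ln (1-t)) \<le> 1"
proof (cases "t \<le> 1/2")
  case True then show ?thesis using half_bound t by simp
next
  case False
  then have "(-ln (1-t)) * (-ln (1-(1-t))) \<le> 1" using half_bound[of "1-t"] t by simp
  then show ?thesis by (simp add: mult.commute)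
qed

theorem mainTheorem7:
  fixes x :: real
  shows "(x \<ge> 1 \<longrightarrow> Bigamma x x \<ge> Gamma x / x powr x)
       \<and> (0 < x \<and> x \<le> 1 \<longrightarrow> Bigamma x x \<le> Gamma x / x powr x)"
proof -
  define P where "P = (\<lambda>t::real. (- ln t) powr (x - 1) * (- ln (1 - t)) powr (x - 1))"
  define Q where "Q = (\<lambda>t::real. ((1-t) * (-ln(1-t))) powr (x-1))"
  have B: "Bigamma x x = (LBINT t:{0<..<1}. P t)" by (simp add: Bigamma_def P_def)
  have PQ: "P t = ((- ln t) * (- ln (1 - t))) powr (x - 1)" if "0 < t" "t < 1" for t
    using that unfolding P_def by (subst powr_mult) auto
  have cmp: "0 < (1-t) * (-ln(1-t)) \<and> (1-t) * (-ln(1-t)) \<le> (- ln t) * (- ln (1 - t))"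
    if t: "0 < t" "t < 1" for t :: real
  proof -
    have "ln t \<le> t - 1" using t by (simp add: ln_le_minus_one)
    then have c: "1 - t \<le> - ln t" by simp
    have a: "0 < -ln(1-t)" using t by simp
    have b: "0 < 1 - t" using t by simp
    have "0 < (1-t) * (-ln(1-t))" by (rule mult_pos_pos[OF b a])
    moreover have "(1-t) * (-ln(1-t)) \<le> (- ln t) * (- ln (1 - t))"
      by (rule mult_right_mono[OF c]) (use a in simp)
    ultimately show ?thesis by blast
  qed
  have meas: "set_borel_measurable lborel {0<..<1} P"
    unfolding set_borel_measurable_def P_def by measurable
  show ?thesis
  proof (intro conjI impI)
    assume x: "x \<ge> 1"
    have intP: "set_integrable lborel {0<..<1} P"
    proof (rule set_integrable_bound[OF _ meas])
      show "set_integrable lborel {0<..<(1::real)} (\<lambda>_. 1::real)"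
        unfolding set_integrable_def by (auto intro!: integrable_real_indicator borel_open simp: emeasure_lborel_Ioo)
      show "AE t in lborel. t \<in> {0<..<1} \<longrightarrow> norm (P t) \<le> norm (1::real)"
      proof (intro AE_I2 impI)
        fix t :: real assume t: "t \<in> {0<..<1}"
        have "P t = ((- ln t) * (- ln (1 - t))) powr (x - 1)" using t PQ by auto
        also have "\<dots> \<le> 1 powr (x - 1)"
          using prod_bound[of t] t x cmp[of t] by (intro powr_mono2) auto
        finally show "norm (P t) \<le> norm (1::real)" by (simp add: P_def)
      qed
    qed
    have "Gamma x / x powr x = (LBINT t:{0<..<1}. Q t)"
      using key(2)[of x] x by (simp add: Q_def)
    also have "\<dots> \<le> (LBINT t:{0<..<1}. P t)"
    proof (rule set_integral_mono)
      show "set_integrable lborel {0<..<1} Q" using key(1)[of x] x by (simp add: Q_def)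
      show "set_integrable lborel {0<..<1} P" by (rule intP)
      fix t :: real assume t: "t \<in> {0<..<1}"
      show "Q t \<le> P t" using t cmp[of t] x PQ[of t] unfolding Q_def
        by (auto intro!: powr_mono2)
    qed
    finally show "Bigamma x x \<ge> Gamma x / x powr x" using B by simp
  next
    assume x: "0 < x \<and> x \<le> 1"
    show "Bigamma x x \<le> Gamma x / x powr x"
    proof (cases "set_integrable lborel {0<..<1} P")
      case True
      have "(LBINT t:{0<..<1}. P t) \<le> (LBINT t:{0<..<1}. Q t)"
      proof (rule set_integral_mono)
        show "set_integrable lborel {0<..<1} Q" using key(1)[of x] x by (simp add: Q_def)
        show "set_integrable lborel {0<..<1} P" by (rule True)
        fix t :: real assume t: "t \<in> {0<..<1}"
        show "P t \<le> Q t" using t cmp[of t] x PQ[of t] unfolding Q_def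
          by (auto intro!: powr_mono2')
      qed
      also have "\<dots> = Gamma x / x powr x"
        using key(2)[of x] x by (simp add: Q_def)
      finally show ?thesis using B by simp
    next
      case False
      then have "Bigamma x x = 0"
        using B by (simp add: set_lebesgue_integral_def set_integrable_def not_integrable_integral_eq)
      moreover have "0 < Gamma x / x powr x" using x Gamma_real_pos[of x] by simp
      ultimately show ?thesis by simp
    qed
  qed
qed

end
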